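(* Let $G$ be a graph and let $k,m\geq 1$ be integers. Then $k$ cops have a winning strategy on $G$ in the game against $m$ robbers if and only if $k$ cops have a winning strategy on $G$ in the game against a single robber.
   Context: All graphs are finite, simple, connected and reflexive (every vertex is considered adjacent to itself, so a player may stay in place). The game of $k$ cops and $m$ robbers on $G$: in round 0 the cops first choose starting vertices, then the robbers choose theirs. In each round $i\geq 1$, all $k$ cops move (each to an adjacent vertex or staying), then all $m$ robbers move likewise. Several players may occupy the same vertex. Whenever a cop and some robbers occupy the same vertex, those robbers are captured and take no further part in the game (robbers are captured one by one; they need not be captured simultaneously). Both sides have full information. The cops win if all robbers are captured after finitely many rounds; otherwise the robbers win. $G$ is $k$-cop-win if $k$ cops have a winning strategy against one robber; $1$-cop-win graphs are called cop-win. *)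

theory Defs
  imports Main
begin

text \<open>Finite simple connected graph on vertex set V with (irreflexive, symmetric)
  edge relation E.  Reflexivity (staying in place) is modelled by adj.\<close>

definition graph :: "'v set \<Rightarrow> ('v \<Rightarrow> 'v \<Rightarrow> bool) \<Rightarrow> bool" where
  "graph V E \<longleftrightarrow> finite V \<and> V \<noteq> {}
     \<and> (\<forall>u v. E u v \<longrightarrow> u \<in> V \<and> v \<in> V)
     \<and> (\<forall>u v. E u v \<longrightarrow> E v u)
     \<and> (\<forall>u. \<not> E u u)
     \<and> (\<forall>u\<in>V. \<forall>v\<in>V. (u, v) \<in> {(x, y). E x y}\<^sup>*)"

definition adj :: "('v \<Rightarrow> 'v \<Rightarrow> bool) \<Rightarrow> 'v \<Rightarrow> 'v \<Rightarrow> bool" where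
  "adj E u v \<longleftrightarrow> u = v \<or> E u v"

text \<open>A history is the list of completed rounds (cop positions, robber positions).
  A cop strategy maps the history to the cop positions of the next round (for the
  empty history: the initial placement). A robber strategy maps the history and the
  cops' current positions to the robbers' positions.\<close>

type_synonym 'v hist = "('v list \<times> 'v list) list"
type_synonym 'v cop_strat = "'v hist \<Rightarrow> 'v list"
type_synonym 'v rob_strat = "'v hist \<Rightarrow> 'v list \<Rightarrow> 'v list"

fun play :: "'v cop_strat \<Rightarrow> 'v rob_strat \<Rightarrow> nat \<Rightarrow> 'v hist" where
  "play \<sigma> \<tau> 0 = []"
| "play \<sigma> \<tau> (Suc i) = (let h = play \<sigma> \<tau> i; C = \<sigma> h in h @ [(C, \<tau> h C)])"

definition cpos :: "'v cop_strat \<Rightarrow> 'v rob_strat \<Rightarrow> nat \<Rightarrow> 'v list" where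
  "cpos \<sigma> \<tau> i = \<sigma> (play \<sigma> \<tau> i)"

definition rpos :: "'v cop_strat \<Rightarrow> 'v rob_strat \<Rightarrow> nat \<Rightarrow> 'v list" where
  "rpos \<sigma> \<tau> i = \<tau> (play \<sigma> \<tau> i) (cpos \<sigma> \<tau> i)"

text \<open>Robber j has been captured before the robbers' move of round t: at some
  earlier round s < t a cop shared its vertex, either after the robbers' move of
  round s or after the cops' move of round s+1.\<close>

definition caught_before :: "nat \<Rightarrow> 'v cop_strat \<Rightarrow> 'v rob_strat \<Rightarrow> nat \<Rightarrow> nat \<Rightarrow> bool" where
  "caught_before k \<sigma> \<tau> j t \<longleftrightarrow>
     (\<exists>s<t. \<exists>c<k. cpos \<sigma> \<tau> s ! c = rpos \<sigma> \<tau> s ! j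
                 \<or> cpos \<sigma> \<tau> (Suc s) ! c = rpos \<sigma> \<tau> s ! j)"

definition cops_legal ::
  "'v set \<Rightarrow> ('v \<Rightarrow> 'v \<Rightarrow> bool) \<Rightarrow> nat \<Rightarrow> 'v cop_strat \<Rightarrow> 'v rob_strat \<Rightarrow> bool" where
  "cops_legal V E k \<sigma> \<tau> \<longleftrightarrow>
     (\<forall>i. length (cpos \<sigma> \<tau> i) = k \<and> set (cpos \<sigma> \<tau> i) \<subseteq> V
        \<and> (\<forall>c<k. adj E (cpos \<sigma> \<tau> i ! c) (cpos \<sigma> \<tau> (Suc i) ! c)))"

text \<open>Robbers move along edges (or stay); captured robbers take no further part,
  i.e. they stay where they are.\<close>

definition robbers_legal ::
  "'v set \<Rightarrow> ('v \<Rightarrow> 'v \<Rightarrow> bool) \<Rightarrow> nat \<Rightarrow> nat \<Rightarrow> 'v cop_strat \<Rightarrow> 'v rob_strat \<Rightarrow> bool" where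
  "robbers_legal V E k m \<sigma> \<tau> \<longleftrightarrow>
     (\<forall>i. length (rpos \<sigma> \<tau> i) = m \<and> set (rpos \<sigma> \<tau> i) \<subseteq> V
        \<and> (\<forall>j<m. adj E (rpos \<sigma> \<tau> i ! j) (rpos \<sigma> \<tau> (Suc i) ! j)
                 \<and> (caught_before k \<sigma> \<tau> j (Suc i) \<longrightarrow> rpos \<sigma> \<tau> (Suc i) ! j = rpos \<sigma> \<tau> i ! j)))"

definition cops_win :: "'v set \<Rightarrow> ('v \<Rightarrow> 'v \<Rightarrow> bool) \<Rightarrow> nat \<Rightarrow> nat \<Rightarrow> bool" where
  "cops_win V E k m \<longleftrightarrow>
     (\<exists>\<sigma>. \<forall>\<tau>. robbers_legal V E k m \<sigma> \<tau> \<longrightarrow>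
           cops_legal V E k \<sigma> \<tau> \<and> (\<exists>t. \<forall>j<m. caught_before k \<sigma> \<tau> j t))"

end

theory Submission
  imports Defs
begin


declare play.simps(2) [simp del]

lemma play_Suc': "play \<sigma> \<tau> (Suc n) = play \<sigma> \<tau> n @ [(cpos \<sigma> \<tau> n, rpos \<sigma> \<tau> n)]"
  by (simp add: play.simps(2) cpos_def rpos_def Let_def)

lemma play_eq: "play \<sigma> \<tau> n = map (\<lambda>s. (cpos \<sigma> \<tau> s, rpos \<sigma> \<tau> s)) [0..<n]"
  by (induction n) (simp_all add: play_Suc')

lemma length_play[simp]: "length (play \<sigma> \<tau> n) = n"
  by (simp add: play_eq)

lemma cpos_eq: "cpos \<sigma> \<tau> n = \<sigma> (map (\<lambda>s. (cpos \<sigma> \<tau> s, rpos \<sigma> \<tau> s)) [0..<n])"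
  by (metis cpos_def play_eq)

lemma rpos_eq: "rpos \<sigma> \<tau> n = \<tau> (play \<sigma> \<tau> n) (cpos \<sigma> \<tau> n)"
  by (simp add: rpos_def)

lemma caught_mono: "caught_before k \<sigma> \<tau> j n \<Longrightarrow> n \<le> n' \<Longrightarrow> caught_before k \<sigma> \<tau> j n'"
  unfolding caught_before_def by (blast intro: less_le_trans)

type_synonym mode = "(nat \<times> nat) option"
abbreviation "Chase j T \<equiv> Some (j, T)"
abbreviation "Ret \<equiv> None"

definition caughtH :: "nat \<Rightarrow> nat \<Rightarrow> 'v hist \<Rightarrow> bool" where
  "caughtH k j h \<longleftrightarrow> (\<exists>s<length h. \<exists>c<k. fst (h!s) ! c = snd (h!s) ! j
      \<or> (Suc s < length h \<and> fst (h ! Suc s) ! c = snd (h!s) ! j))"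

lemma caughtH_play: "caughtH k j (play \<sigma> \<tau> n) \<longleftrightarrow> (\<exists>s<n. \<exists>c<k. cpos \<sigma> \<tau> s ! c = rpos \<sigma> \<tau> s ! j
   \<or> (Suc s < n \<and> cpos \<sigma> \<tau> (Suc s) ! c = rpos \<sigma> \<tau> s ! j))"
proof -
  have h: "\<And>s. s < n \<Longrightarrow> play \<sigma> \<tau> n ! s = (cpos \<sigma> \<tau> s, rpos \<sigma> \<tau> s)"
    by (simp add: play_eq del: upt_Suc)
  have A: "(fst (play \<sigma> \<tau> n ! s) ! c = snd (play \<sigma> \<tau> n ! s) ! j
      \<or> (Suc s < n \<and> fst (play \<sigma> \<tau> n ! Suc s) ! c = snd (play \<sigma> \<tau> n ! s) ! j))
    \<longleftrightarrow> (cpos \<sigma> \<tau> s ! c = rpos \<sigma> \<tau> s ! j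
   \<or> (Suc s < n \<and> cpos \<sigma> \<tau> (Suc s) ! c = rpos \<sigma> \<tau> s ! j))" if "s < n" for s c
  proof (cases "Suc s < n")
    case True
    then show ?thesis using h[OF that] h[OF True] by simp
  next
    case False
    then show ?thesis using h[OF that] by simp
  qed
  show ?thesis unfolding caughtH_def length_play
  proof
    assume "\<exists>s<n. \<exists>c<k. fst (play \<sigma> \<tau> n ! s) ! c = snd (play \<sigma> \<tau> n ! s) ! j \<or>
                 Suc s < n \<and> fst (play \<sigma> \<tau> n ! Suc s) ! c = snd (play \<sigma> \<tau> n ! s) ! j"
    then obtain s c where "s < n" "c < k" "fst (play \<sigma> \<tau> n ! s) ! c = snd (play \<sigma> \<tau> n ! s) ! j \<or>
                 Suc s < n \<and> fst (play \<sigma> \<tau> n ! Suc s) ! c = snd (play \<sigma> \<tau> n ! s) ! j" by blast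
    then show "\<exists>s<n. \<exists>c<k. cpos \<sigma> \<tau> s ! c = rpos \<sigma> \<tau> s ! j
   \<or> (Suc s < n \<and> cpos \<sigma> \<tau> (Suc s) ! c = rpos \<sigma> \<tau> s ! j)" using A by blast
  next
    assume "\<exists>s<n. \<exists>c<k. cpos \<sigma> \<tau> s ! c = rpos \<sigma> \<tau> s ! j
   \<or> (Suc s < n \<and> cpos \<sigma> \<tau> (Suc s) ! c = rpos \<sigma> \<tau> s ! j)"
    then obtain s c where "s < n" "c < k" "cpos \<sigma> \<tau> s ! c = rpos \<sigma> \<tau> s ! j
   \<or> (Suc s < n \<and> cpos \<sigma> \<tau> (Suc s) ! c = rpos \<sigma> \<tau> s ! j)" by blast
    then show "\<exists>s<n. \<exists>c<k. fst (play \<sigma> \<tau> n ! s) ! c = snd (play \<sigma> \<tau> n ! s) ! j \<or>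
                 Suc s < n \<and> fst (play \<sigma> \<tau> n ! Suc s) ! c = snd (play \<sigma> \<tau> n ! s) ! j"
      using A by blast
  qed
qed

lemma caught_imp_H: "caught_before k \<sigma> \<tau> j n \<Longrightarrow> caughtH k j (play \<sigma> \<tau> (Suc n))"
proof -
  assume "caught_before k \<sigma> \<tau> j n"
  then obtain s c where "s < n" "c < k" "cpos \<sigma> \<tau> s ! c = rpos \<sigma> \<tau> s ! j
                 \<or> cpos \<sigma> \<tau> (Suc s) ! c = rpos \<sigma> \<tau> s ! j"
    unfolding caught_before_def by blast
  then show ?thesis unfolding caughtH_play by (intro exI[of _ s] conjI exI[of _ c]) auto
qed

lemma H_imp_caught: "caughtH k j (play \<sigma> \<tau> n) \<Longrightarrow> caught_before k \<sigma> \<tau> j n"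
  unfolding caughtH_play caught_before_def by blast

lemma H_mono: "caughtH k j (play \<sigma> \<tau> n) \<Longrightarrow> n \<le> n' \<Longrightarrow> caughtH k j (play \<sigma> \<tau> n')"
proof -
  assume a: "caughtH k j (play \<sigma> \<tau> n)" "n \<le> n'"
  then obtain s c where "s < n" "c < k" "cpos \<sigma> \<tau> s ! c = rpos \<sigma> \<tau> s ! j
                 \<or> (Suc s < n \<and> cpos \<sigma> \<tau> (Suc s) ! c = rpos \<sigma> \<tau> s ! j)"
    unfolding caughtH_play by blast
  then show ?thesis unfolding caughtH_play using a(2) by (intro exI[of _ s] conjI exI[of _ c]) auto
qed

definition mtrans :: "nat \<Rightarrow> nat \<Rightarrow> 'v list \<Rightarrow> mode \<Rightarrow> 'v hist \<Rightarrow> mode" where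
  "mtrans k m P md h = (case md of
     Some (j, T) \<Rightarrow> (if caughtH k j h then Ret else Chase j T)
   | None \<Rightarrow> (if fst (last h) = P \<and> (\<exists>j<m. \<not> caughtH k j h)
            then Chase (LEAST j. j < m \<and> \<not> caughtH k j h) (length h) else Ret))"

fun modeN :: "nat \<Rightarrow> nat \<Rightarrow> 'v list \<Rightarrow> 'v hist \<Rightarrow> nat \<Rightarrow> mode" where
  "modeN k m P h 0 = Chase 0 0"
| "modeN k m P h (Suc n) = mtrans k m P (modeN k m P h n) (take (Suc n) h)"

lemma modeN_take: "take n h = take n h' \<Longrightarrow> modeN k m P h n = modeN k m P h' n"
proof (induction n)
  case 0 then show ?case by simp
next
  case (Suc n)
  have "take n h = take n h'"
    using arg_cong[OF Suc.prems, of "take n"] by simp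
  then show ?case using Suc by simp
qed

definition outp :: "'v cop_strat \<Rightarrow> ('v \<Rightarrow> 'v \<Rightarrow> 'v) \<Rightarrow> nat \<Rightarrow> 'v list \<Rightarrow> mode \<Rightarrow> 'v hist \<Rightarrow> 'v list" where
  "outp \<sigma>1 st k P md h = (case md of
     Some (j, T) \<Rightarrow> \<sigma>1 (map (\<lambda>(C, R). (C, [R ! j])) (drop T h))
   | None \<Rightarrow> (if h = [] then P else map (\<lambda>c. st (fst (last h) ! c) (P ! c)) [0..<k]))"

definition gdist :: "('v \<Rightarrow> 'v \<Rightarrow> bool) \<Rightarrow> 'v \<Rightarrow> 'v \<Rightarrow> nat" where
  "gdist E q p = (LEAST n. (q, p) \<in> {(x, y). E x y} ^^ n)"

definition stp :: "('v \<Rightarrow> 'v \<Rightarrow> bool) \<Rightarrow> 'v \<Rightarrow> 'v \<Rightarrow> 'v" where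
  "stp E q p = (if q = p then p else (SOME q'. E q q' \<and> gdist E q' p < gdist E q p))"

definition sigm :: "('v \<Rightarrow> 'v \<Rightarrow> bool) \<Rightarrow> 'v cop_strat \<Rightarrow> nat \<Rightarrow> nat \<Rightarrow> 'v cop_strat" where
  "sigm E \<sigma>1 k m h = outp \<sigma>1 (stp E) k (\<sigma>1 []) (modeN k m (\<sigma>1 []) h (length h)) h"

lemma graph_E: "graph V E \<Longrightarrow> E u v \<Longrightarrow> u \<in> V \<and> v \<in> V"
  by (simp add: graph_def)

lemma gdist_ex: assumes "graph V E" "q \<in> V" "p \<in> V"
  shows "(q, p) \<in> {(x, y). E x y} ^^ gdist E q p"
proof -
  have "\<forall>u\<in>V. \<forall>v\<in>V. (u, v) \<in> {(x, y). E x y}\<^sup>*" using assms(1) by (simp add: graph_def)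
  then have "(q, p) \<in> {(x, y). E x y}\<^sup>*" using assms(2,3) by blast
  then obtain n where "(q, p) \<in> {(x, y). E x y} ^^ n" using rtrancl_power by blast
  then show ?thesis unfolding gdist_def by (rule LeastI)
qed

lemma stp_props: assumes "graph V E" "q \<in> V" "p \<in> V" "q \<noteq> p"
  shows "E q (stp E q p) \<and> gdist E (stp E q p) p < gdist E q p"
proof -
  have h: "(q, p) \<in> {(x, y). E x y} ^^ gdist E q p" by (rule gdist_ex[OF assms(1-3)])
  have "gdist E q p \<noteq> 0"
  proof
    assume "gdist E q p = 0"
    with h have "(q, p) \<in> {(x, y). E x y} ^^ 0" by simp
    then have "q = p" by simp
    with assms(4) show False by simp
  qed
  then obtain n where n: "gdist E q p = Suc n" using not0_implies_Suc by blast
  have h': "(q, p) \<in> {(x, y). E x y} ^^ Suc n" using h n by simp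
  obtain y where y0: "(q, y) \<in> {(x, y). E x y}" and y: "(y, p) \<in> {(x, y). E x y} ^^ n"
    using relpow_Suc_D2[OF h'] by blast
  from y0 have "E q y" by simp
  note y = this y
  have "gdist E y p \<le> n" unfolding gdist_def using y(2) by (rule Least_le)
  then have "E q y \<and> gdist E y p < gdist E q p" using y(1) n by simp
  then have "\<exists>q'. E q q' \<and> gdist E q' p < gdist E q p" by blast
  from someI_ex[OF this] show ?thesis unfolding stp_def using assms(4) by simp
qed

lemma stp_V: assumes "graph V E" "q \<in> V" "p \<in> V"
  shows "stp E q p \<in> V \<and> adj E q (stp E q p)"
proof (cases "q = p")
  case True then show ?thesis using assms by (simp add: stp_def adj_def)
next
  case False
  then have "E q (stp E q p)" using stp_props[OF assms False] by blast
  moreover have "stp E q p \<in> V" using graph_E[OF assms(1) \<open>E q (stp E q p)\<close>] by simp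
  ultimately show ?thesis by (simp add: adj_def)
qed

lemma gdist_zero: "gdist E p p = 0"
  unfolding gdist_def by (rule Least_eq_0) simp

lemma drop_map_upt: "drop T (map f [0..<T+n]) = map (\<lambda>s. f (T+s)) [0..<n]"
  by (rule nth_equalityI) auto



declare modeN.simps(2) [simp del]

lemma len1_hd: "length xs = Suc 0 \<Longrightarrow> xs = [hd xs]"
  by (cases xs) auto

locale cw =
  fixes V :: "'v set" and E :: "'v \<Rightarrow> 'v \<Rightarrow> bool" and k m :: nat
    and \<sigma>1 :: "'v cop_strat" and \<tau> :: "'v rob_strat"
  assumes G: "graph V E" and m1: "1 \<le> m"
    and win: "\<And>\<tau>1. robbers_legal V E k 1 \<sigma>1 \<tau>1 \<Longrightarrow>
        cops_legal V E k \<sigma>1 \<tau>1 \<and> (\<exists>t. \<forall>j<1. caught_before k \<sigma>1 \<tau>1 j t)"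
    and RL: "robbers_legal V E k m (sigm E \<sigma>1 k m) \<tau>"
begin

abbreviation "S \<equiv> sigm E \<sigma>1 k m"
abbreviation "P \<equiv> \<sigma>1 []"
abbreviation "cp n \<equiv> cpos S \<tau> n"
abbreviation "rp n \<equiv> rpos S \<tau> n"
abbreviation "md n \<equiv> modeN k m P (play S \<tau> n) n"

lemma md_0: "md 0 = Chase 0 0" by simp

lemma md_Suc: "md (Suc n) = mtrans k m P (md n) (play S \<tau> (Suc n))"
proof -
  have "take n (play S \<tau> (Suc n)) = take n (play S \<tau> n)" by (simp add: play_Suc')
  then have "modeN k m P (play S \<tau> (Suc n)) n = md n" by (rule modeN_take)
  then show ?thesis by (simp add: modeN.simps(2))
qed

lemma cp_eq: "cp n = outp \<sigma>1 (stp E) k P (md n) (play S \<tau> n)"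
  by (simp add: cpos_def sigm_def)

lemma rp_len: "length (rp i) = m" and rp_set: "set (rp i) \<subseteq> V"
  using RL unfolding robbers_legal_def by auto

lemma rp_adj: "j < m \<Longrightarrow> adj E (rp i ! j) (rp (Suc i) ! j)"
  using RL unfolding robbers_legal_def by blast

lemma rp_frozen: "j < m \<Longrightarrow> caught_before k S \<tau> j (Suc i) \<Longrightarrow> rp (Suc i) ! j = rp i ! j"
  using RL unfolding robbers_legal_def by blast

lemma rp_V: "j < m \<Longrightarrow> rp i ! j \<in> V"
  using rp_len rp_set by (metis nth_mem subsetD)

lemma P_valid: "length P = k \<and> set P \<subseteq> V"
proof -
  obtain v where v: "v \<in> V" using G unfolding graph_def by blast
  let ?t = "\<lambda>(h::'v hist) (C::'v list). [v]"
  have "robbers_legal V E k 1 \<sigma>1 ?t" unfolding robbers_legal_def rpos_def by (simp add: v adj_def)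
  then have "cops_legal V E k \<sigma>1 ?t" using win by blast
  then have "length (cpos \<sigma>1 ?t 0) = k \<and> set (cpos \<sigma>1 ?t 0) \<subseteq> V" unfolding cops_legal_def by blast
  then show ?thesis by (simp add: cpos_def)
qed

lemma cp_chase: assumes "md n = Chase j T" "T \<le> n"
  shows "cp n = \<sigma>1 (map (\<lambda>s. (cp (T+s), [rp (T+s) ! j])) [0..<n-T])"
proof -
  obtain d where d: "n = T + d" using assms(2) by (metis le_add_diff_inverse)
  have dr: "drop T (play S \<tau> n) = map (\<lambda>s. (cp (T+s), rp (T+s))) [0..<d]"
    unfolding d play_eq by (rule drop_map_upt)
  have "cp n = outp \<sigma>1 (stp E) k P (md n) (play S \<tau> n)" by (rule cp_eq)
  also have "\<dots> = \<sigma>1 (map (\<lambda>(C, R). (C, [R ! j])) (drop T (play S \<tau> n)))"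
    using assms(1) by (simp add: outp_def)
  also have "\<dots> = \<sigma>1 (map (\<lambda>s. (cp (T+s), [rp (T+s) ! j])) [0..<n-T])"
    unfolding dr using d by (simp add: comp_def)
  finally show ?thesis .
qed

lemma md_inv: "md n = Chase j T \<Longrightarrow> j < m \<and> T \<le> n \<and> (\<forall>l. T \<le> l \<and> l \<le> n \<longrightarrow> md l = Chase j T)"
proof (induction n arbitrary: j T)
  case 0
  then show ?case using m1 by auto
next
  case (Suc n)
  show ?case
  proof (cases "md n")
    case None
    then have eq: "md (Suc n) = (if fst (last (play S \<tau> (Suc n))) = P \<and> (\<exists>j<m. \<not> caughtH k j (play S \<tau> (Suc n)))
        then Chase (LEAST j. j < m \<and> \<not> caughtH k j (play S \<tau> (Suc n))) (Suc n) else Ret)"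
      by (simp add: md_Suc mtrans_def)
    with Suc.prems have j: "j = (LEAST j. j < m \<and> \<not> caughtH k j (play S \<tau> (Suc n)))" "T = Suc n"
      and ex: "\<exists>j<m. \<not> caughtH k j (play S \<tau> (Suc n))"
      by (auto split: if_splits)
    have "j < m" using LeastI_ex[OF ex] j(1) by simp
    then show ?thesis using j(2) Suc.prems by (auto simp: le_Suc_eq)
  next
    case (Some a)
    then obtain j' T' where a: "md n = Chase j' T'" by (cases a) auto
    then have "md (Suc n) = (if caughtH k j' (play S \<tau> (Suc n)) then Ret else Chase j' T')"
      by (simp add: md_Suc mtrans_def)
    with Suc.prems have jj: "j = j'" "T = T'" by (auto split: if_splits)
    have IH: "j' < m \<and> T' \<le> n \<and> (\<forall>l. T' \<le> l \<and> l \<le> n \<longrightarrow> md l = Chase j' T')"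
      using Suc.IH[OF a] .
    show ?thesis using IH jj Suc.prems by (auto simp: le_Suc_eq)
  qed
qed

lemma sim:
  assumes ph: "\<And>l. T \<le> l \<Longrightarrow> l \<le> T + M \<Longrightarrow> md l = Chase j T"
    and gM: "\<And>i. i \<le> M \<Longrightarrow> g i = i"
  shows "i \<le> M \<Longrightarrow> cpos \<sigma>1 (\<lambda>h C. [rp (T + g (length h)) ! j]) i = cp (T+i)"
proof (induction i rule: less_induct)
  case (less i)
  let ?t = "\<lambda>h C. [rp (T + g (length h)) ! j]"
  have r: "\<And>s. rpos \<sigma>1 ?t s = [rp (T + g s) ! j]" by (simp add: rpos_def)
  have "cpos \<sigma>1 ?t i = \<sigma>1 (map (\<lambda>s. (cpos \<sigma>1 ?t s, rpos \<sigma>1 ?t s)) [0..<i])" by (rule cpos_eq)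
  also have "\<dots> = \<sigma>1 (map (\<lambda>s. (cp (T+s), [rp (T+s) ! j])) [0..<i])"
  proof (intro arg_cong[where f=\<sigma>1] map_cong refl)
    fix s assume "s \<in> set [0..<i]"
    then have s: "s < i" by simp
    then show "(cpos \<sigma>1 ?t s, rpos \<sigma>1 ?t s) = (cp (T+s), [rp (T+s) ! j])"
      using less.IH[OF s] less.prems gM[of s] r[of s] by simp
  qed
  also have "\<dots> = cp (T+i)" using cp_chase[of "T+i" j T] ph[of "T+i"] less.prems by simp
  finally show ?case .
qed

lemma sim_legal:
  assumes j: "j < m"
    and Gh: "\<And>i. g (Suc i) = g i \<or> (\<forall>s \<le> Suc i. g s = s \<and> cpos \<sigma>1 (\<lambda>h C. [rp (T + g (length h)) ! j]) s = cp (T+s))"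
  shows "robbers_legal V E k 1 \<sigma>1 (\<lambda>h C. [rp (T + g (length h)) ! j])"
proof -
  let ?t = "\<lambda>h C. [rp (T + g (length h)) ! j]"
  have r: "\<And>s. rpos \<sigma>1 ?t s = [rp (T + g s) ! j]" by (simp add: rpos_def)
  have A: "adj E (rpos \<sigma>1 ?t i ! 0) (rpos \<sigma>1 ?t (Suc i) ! 0)" for i
  proof (cases "g (Suc i) = g i")
    case True then show ?thesis by (simp add: r adj_def)
  next
    case False
    then have "g (Suc i) = Suc i" "g i = i" using Gh[of i] by auto
    then show ?thesis using rp_adj[OF j, of "T+i"] by (simp add: r)
  qed
  have B: "rpos \<sigma>1 ?t (Suc i) ! 0 = rpos \<sigma>1 ?t i ! 0" if cb: "caught_before k \<sigma>1 ?t 0 (Suc i)" for i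
  proof (cases "g (Suc i) = g i")
    case True then show ?thesis by (simp add: r)
  next
    case False
    then have A: "\<forall>s \<le> Suc i. g s = s \<and> cpos \<sigma>1 ?t s = cp (T+s)" using Gh[of i] by auto
    from cb obtain s c where s: "s < Suc i" "c < k"
      and d: "cpos \<sigma>1 ?t s ! c = rpos \<sigma>1 ?t s ! 0 \<or> cpos \<sigma>1 ?t (Suc s) ! c = rpos \<sigma>1 ?t s ! 0"
      unfolding caught_before_def by blast
    have e1: "cpos \<sigma>1 ?t s = cp (T+s)" "g s = s" using A s(1) by auto
    have e2: "cpos \<sigma>1 ?t (Suc s) = cp (T + Suc s)" using A s(1) by auto
    from d have "cp (T+s) ! c = rp (T+s) ! j \<or> cp (Suc (T+s)) ! c = rp (T+s) ! j"
      using e1 e2 by (simp add: r)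
    then have "caught_before k S \<tau> j (Suc (T+s))" unfolding caught_before_def using s(2) by blast
    then have "caught_before k S \<tau> j (Suc (T+i))" by (rule caught_mono) (use s in simp)
    then have "rp (Suc (T+i)) ! j = rp (T+i) ! j" by (rule rp_frozen[OF j])
    moreover have "g (Suc i) = Suc i" "g i = i" using A by auto
    ultimately show ?thesis by (simp add: r)
  qed
  show ?thesis unfolding robbers_legal_def
  proof (intro allI conjI impI)
    fix i
    show "length (rpos \<sigma>1 ?t i) = 1" by (simp add: r)
    show "set (rpos \<sigma>1 ?t i) \<subseteq> V" using rp_V[OF j] by (simp add: r)
    fix j' :: nat assume "j' < 1"
    then have j': "j' = 0" by simp
    show "adj E (rpos \<sigma>1 ?t i ! j') (rpos \<sigma>1 ?t (Suc i) ! j')" using A j' by simp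
    show "caught_before k \<sigma>1 ?t j' (Suc i) \<Longrightarrow> rpos \<sigma>1 ?t (Suc i) ! j' = rpos \<sigma>1 ?t i ! j'"
      using B j' by simp
  qed
qed

lemma chase_sim:
  assumes "md N = Chase j T"
  shows "cops_legal V E k \<sigma>1 (\<lambda>h C. [rp (T + min (length h) (N - T)) ! j])
      \<and> (\<forall>i \<le> N-T. cpos \<sigma>1 (\<lambda>h C. [rp (T + min (length h) (N - T)) ! j]) i = cp (T+i))"
proof -
  from md_inv[OF assms(1)] have j: "j < m" and TN: "T \<le> N" and ph0: "\<forall>l. T \<le> l \<and> l \<le> N \<longrightarrow> md l = Chase j T"
    by auto
  have ph: "\<And>l. T \<le> l \<Longrightarrow> l \<le> T + (N-T) \<Longrightarrow> md l = Chase j T" using ph0 TN by auto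
  have eq: "\<And>i. i \<le> N-T \<Longrightarrow> cpos \<sigma>1 (\<lambda>h C. [rp (T + min (length h) (N - T)) ! j]) i = cp (T+i)"
    using sim[OF ph, where g = "\<lambda>n. min n (N-T)"] by auto
  have "robbers_legal V E k 1 \<sigma>1 (\<lambda>h C. [rp (T + min (length h) (N - T)) ! j])"
  proof (rule sim_legal[OF j, where g = "\<lambda>n. min n (N-T)"])
    fix i
    show "min (Suc i) (N-T) = min i (N-T) \<or> (\<forall>s\<le>Suc i. min s (N-T) = s \<and>
       cpos \<sigma>1 (\<lambda>h C. [rp (T + min (length h) (N-T)) ! j]) s = cp (T+s))"
    proof (cases "i < N-T")
      case True then show ?thesis using eq by auto
    next
      case False then show ?thesis by auto
    qed
  qed
  then show ?thesis using win eq by blast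
qed

lemma chase_valid: assumes "md n = Chase j T" shows "length (cp n) = k \<and> set (cp n) \<subseteq> V"
proof -
  have TN: "T \<le> n" using md_inv[OF assms] by simp
  from chase_sim[OF assms] have
    L: "cops_legal V E k \<sigma>1 (\<lambda>h C. [rp (T + min (length h) (n - T)) ! j])" and
    e: "cpos \<sigma>1 (\<lambda>h C. [rp (T + min (length h) (n - T)) ! j]) (n-T) = cp n" using TN by auto
  from L have "length (cpos \<sigma>1 (\<lambda>h C. [rp (T + min (length h) (n - T)) ! j]) (n-T)) = k \<and>
     set (cpos \<sigma>1 (\<lambda>h C. [rp (T + min (length h) (n - T)) ! j]) (n-T)) \<subseteq> V"
    unfolding cops_legal_def by blast
  then show ?thesis using e by simp
qed

lemma cp_ret: "md (Suc n) = Ret \<Longrightarrow> cp (Suc n) = map (\<lambda>c. stp E (cp n ! c) (P ! c)) [0..<k]"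
  by (simp add: cp_eq[of "Suc n"] outp_def play_Suc')

lemma cp_valid: "length (cp n) = k \<and> set (cp n) \<subseteq> V"
proof (induction n)
  case 0
  show ?case using chase_valid[OF md_0] .
next
  case (Suc n)
  show ?case
  proof (cases "md (Suc n)")
    case None
    have "\<And>c. c < k \<Longrightarrow> stp E (cp n ! c) (P ! c) \<in> V"
      using stp_V[OF G] Suc.IH P_valid by (metis nth_mem subsetD)
    then show ?thesis using cp_ret[OF None] by auto
  next
    case (Some a)
    then obtain j T where "md (Suc n) = Chase j T" by (cases a) auto
    then show ?thesis by (rule chase_valid)
  qed
qed

lemma cp_adj: assumes c: "c < k" shows "adj E (cp n ! c) (cp (Suc n) ! c)"
proof (cases "md (Suc n)")
  case None
  have "cp n ! c \<in> V" "P ! c \<in> V" using cp_valid[of n] P_valid c by (metis nth_mem subsetD)+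
  then show ?thesis using cp_ret[OF None] stp_V[OF G] c by simp
next
  case (Some a)
  then obtain j T where a: "md (Suc n) = Chase j T" by (cases a) auto
  have TN: "T \<le> Suc n" using md_inv[OF a] by simp
  show ?thesis
  proof (cases "T = Suc n")
    case True
    have Pn: "cp n = P"
    proof (cases "md n")
      case None
      then have "md (Suc n) = (if fst (last (play S \<tau> (Suc n))) = P \<and> (\<exists>j<m. \<not> caughtH k j (play S \<tau> (Suc n)))
        then Chase (LEAST j. j < m \<and> \<not> caughtH k j (play S \<tau> (Suc n))) (Suc n) else Ret)"
        by (simp add: md_Suc mtrans_def)
      then have "fst (last (play S \<tau> (Suc n))) = P"
      proof -
        assume eq: "md (Suc n) = (if fst (last (play S \<tau> (Suc n))) = P \<and> (\<exists>j<m. \<not> caughtH k j (play S \<tau> (Suc n)))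
          then Chase (LEAST j. j < m \<and> \<not> caughtH k j (play S \<tau> (Suc n))) (Suc n) else Ret)"
        show ?thesis
        proof (rule ccontr)
          assume "fst (last (play S \<tau> (Suc n))) \<noteq> P"
          then have "md (Suc n) = Ret" using eq by (simp only: if_False simp_thms)
          then show False using a by simp
        qed
      qed
      moreover have "last (play S \<tau> (Suc n)) = (cp n, rp n)" by (simp only: play_Suc' last_snoc)
      ultimately show ?thesis by simp
    next
      case (Some b)
      then obtain j' T' where b: "md n = Chase j' T'" by (cases b) auto
      have "T' \<le> n" using md_inv[OF b] by simp
      moreover have "md (Suc n) = (if caughtH k j' (play S \<tau> (Suc n)) then Ret else Chase j' T')"
        using b by (simp add: md_Suc mtrans_def)
      ultimately show ?thesis using a True by (simp split: if_splits)
    qed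
    have "cp (Suc n) = P" using cp_chase[OF a] True by simp
    then show ?thesis using Pn by (simp add: adj_def)
  next
    case False
    then have TN': "T \<le> n" using TN by simp
    from chase_sim[OF a] have
      L: "cops_legal V E k \<sigma>1 (\<lambda>h C. [rp (T + min (length h) (Suc n - T)) ! j])" and
      e: "\<forall>i \<le> Suc n - T. cpos \<sigma>1 (\<lambda>h C. [rp (T + min (length h) (Suc n - T)) ! j]) i = cp (T+i)"
      by auto
    from L c have "adj E (cpos \<sigma>1 (\<lambda>h C. [rp (T + min (length h) (Suc n - T)) ! j]) (n - T) ! c)
        (cpos \<sigma>1 (\<lambda>h C. [rp (T + min (length h) (Suc n - T)) ! j]) (Suc (n - T)) ! c)"
      unfolding cops_legal_def by blast
    moreover have "cpos \<sigma>1 (\<lambda>h C. [rp (T + min (length h) (Suc n - T)) ! j]) (n - T) = cp n"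
    proof -
      have "n - T \<le> Suc n - T" by simp
      then have "cpos \<sigma>1 (\<lambda>h C. [rp (T + min (length h) (Suc n - T)) ! j]) (n - T) = cp (T + (n - T))"
        using e by blast
      moreover have "T + (n - T) = n" using TN' by simp
      ultimately show ?thesis by simp
    qed
    moreover have "cpos \<sigma>1 (\<lambda>h C. [rp (T + min (length h) (Suc n - T)) ! j]) (Suc (n - T)) = cp (Suc n)"
    proof -
      have "Suc (n - T) \<le> Suc n - T" using TN' by simp
      then have "cpos \<sigma>1 (\<lambda>h C. [rp (T + min (length h) (Suc n - T)) ! j]) (Suc (n - T)) = cp (T + Suc (n - T))"
        using e by blast
      moreover have "T + Suc (n - T) = Suc n" using TN' by simp
      ultimately show ?thesis by simp
    qed
    ultimately show ?thesis by simp
  qed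
qed

lemma cops_ok: "cops_legal V E k S \<tau>"
  unfolding cops_legal_def using cp_valid cp_adj by blast

end



context cw
begin

lemma chase_ends: assumes all: "\<And>l. T \<le> l \<Longrightarrow> md l = Chase j T" shows False
proof -
  have j: "j < m" using md_inv[OF all[of T]] by simp
  let ?t = "\<lambda>h C. [rp (T + (\<lambda>n. n) (length h)) ! j]"
  have eq: "cpos \<sigma>1 ?t i = cp (T+i)" for i
  proof -
    have ph: "\<And>l. T \<le> l \<Longrightarrow> l \<le> T + i \<Longrightarrow> md l = Chase j T" using all by blast
    show ?thesis using sim[OF ph, where g = "\<lambda>n. n" and i = i] by simp
  qed
  have r: "\<And>s. rpos \<sigma>1 ?t s = [rp (T + s) ! j]" by (simp add: rpos_def)
  have "robbers_legal V E k 1 \<sigma>1 ?t"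
    by (rule sim_legal[OF j, where g = "\<lambda>n. n"]) (simp add: eq)
  then obtain t where "\<forall>j'<1. caught_before k \<sigma>1 ?t j' t" using win by blast
  then have "caught_before k \<sigma>1 ?t 0 t" by simp
  then obtain s c where s: "s < t" "c < k"
    and d: "cpos \<sigma>1 ?t s ! c = rpos \<sigma>1 ?t s ! 0 \<or> cpos \<sigma>1 ?t (Suc s) ! c = rpos \<sigma>1 ?t s ! 0"
    unfolding caught_before_def by blast
  from d have "cp (T+s) ! c = rp (T+s) ! j \<or> cp (Suc (T+s)) ! c = rp (T+s) ! j"
    by (simp add: eq r)
  then have "caught_before k S \<tau> j (Suc (T+s))" unfolding caught_before_def using s(2) by blast
  then have H: "caughtH k j (play S \<tau> (Suc (Suc (T+s))))" by (rule caught_imp_H)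
  have "md (Suc (T+s)) = Chase j T" using all by simp
  then have "md (Suc (Suc (T+s))) = Ret" using H by (simp add: md_Suc[of "Suc (T+s)"] mtrans_def)
  moreover have "md (Suc (Suc (T+s))) = Chase j T" using all by simp
  ultimately show False by simp
qed

lemma chase_exit: assumes a: "md n = Chase j T"
  shows "\<exists>n'>n. md n' = Ret \<and> caughtH k j (play S \<tau> n')"
proof (rule ccontr)
  assume no: "\<not> (\<exists>n'>n. md n' = Ret \<and> caughtH k j (play S \<tau> n'))"
  have all: "md (n + l) = Chase j T" for l
  proof (induction l)
    case 0 then show ?case using a by simp
  next
    case (Suc l)
    have eq: "md (Suc (n + l)) = (if caughtH k j (play S \<tau> (Suc (n + l))) then Ret else Chase j T)"
      using Suc.IH by (simp add: md_Suc[of "n + l"] mtrans_def)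
    show ?case
    proof (cases "caughtH k j (play S \<tau> (Suc (n + l)))")
      case True
      then have "md (Suc (n + l)) = Ret" using eq by simp
      then have "\<exists>n'>n. md n' = Ret \<and> caughtH k j (play S \<tau> n')"
        using True by (intro exI[of _ "Suc (n + l)"]) simp
      with no show ?thesis by blast
    next
      case False
      then show ?thesis using eq by simp
    qed
  qed
  have "md l = Chase j T" if "T \<le> l" for l
  proof (cases "l \<le> n")
    case True then show ?thesis using md_inv[OF a] that by blast
  next
    case False
    then have "l = n + (l - n)" by simp
    then show ?thesis using all[of "l - n"] by simp
  qed
  then show False by (rule chase_ends)
qed

definition mu :: "nat \<Rightarrow> nat" where
  "mu n = (\<Sum>c<k. gdist E (cp n ! c) (P ! c))"

lemma ret_reach: "md n = Ret \<Longrightarrow> \<exists>n'\<ge>n. md n' = Ret \<and> cp n' = P"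
proof (induction "mu n" arbitrary: n rule: less_induct)
  case less
  show ?case
  proof (cases "cp n = P")
    case True then show ?thesis using less.prems by auto
  next
    case False
    have r: "md (Suc n) = Ret"
    proof -
      have "md (Suc n) = mtrans k m P (md n) (play S \<tau> (Suc n))" by (rule md_Suc)
      also have "\<dots> = (if fst (last (play S \<tau> (Suc n))) = P \<and> (\<exists>j<m. \<not> caughtH k j (play S \<tau> (Suc n)))
        then Chase (LEAST j. j < m \<and> \<not> caughtH k j (play S \<tau> (Suc n))) (Suc n) else Ret)"
        using less.prems by (simp add: mtrans_def)
      also have "fst (last (play S \<tau> (Suc n))) = cp n" by (simp only: play_Suc' last_snoc fst_conv)
      finally show ?thesis using False by simp
    qed
    have cpS: "cp (Suc n) = map (\<lambda>c. stp E (cp n ! c) (P ! c)) [0..<k]" by (rule cp_ret[OF r])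
    have lk: "length (cp n) = k" "length P = k" using cp_valid P_valid by auto
    obtain c0 where c0: "c0 < k" "cp n ! c0 \<noteq> P ! c0"
      using False lk nth_equalityI by metis
    have inV: "\<And>c. c < k \<Longrightarrow> cp n ! c \<in> V \<and> P ! c \<in> V"
      using cp_valid[of n] P_valid lk by (metis nth_mem subsetD)
    have le: "gdist E (cp (Suc n) ! c) (P ! c) \<le> gdist E (cp n ! c) (P ! c)" if c: "c < k" for c
    proof (cases "cp n ! c = P ! c")
      case True then show ?thesis using cpS c by (simp add: stp_def gdist_zero)
    next
      case False then show ?thesis using cpS c stp_props[OF G _ _ False] inV[OF c] by simp
    qed
    have lt: "gdist E (cp (Suc n) ! c0) (P ! c0) < gdist E (cp n ! c0) (P ! c0)"
      using cpS c0 stp_props[OF G _ _ c0(2)] inV[OF c0(1)] by simp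
    have "mu (Suc n) < mu n" unfolding mu_def
      by (rule sum_strict_mono_ex1) (use le lt c0 in auto)
    then obtain n' where "n' \<ge> Suc n" "md n' = Ret" "cp n' = P" using less.hyps r by blast
    then show ?thesis by (intro exI[of _ n']) auto
  qed
qed

definition U :: "nat \<Rightarrow> nat set" where
  "U n = {j. j < m \<and> \<not> caughtH k j (play S \<tau> n)}"

lemma U_anti: "n \<le> n' \<Longrightarrow> U n' \<subseteq> U n"
  unfolding U_def using H_mono by blast

lemma ret_progress: "md n = Ret \<Longrightarrow> \<exists>n'. U n' = {}"
proof (induction "card (U n)" arbitrary: n rule: less_induct)
  case less
  obtain n1 where n1: "n1 \<ge> n" "md n1 = Ret" "cp n1 = P" using ret_reach[OF less.prems] by blast
  show ?case
  proof (cases "U (Suc n1) = {}")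
    case True then show ?thesis by blast
  next
    case False
    then have ex: "\<exists>j. j < m \<and> \<not> caughtH k j (play S \<tau> (Suc n1))" by (auto simp: U_def)
    define j0 where "j0 = (LEAST j. j < m \<and> \<not> caughtH k j (play S \<tau> (Suc n1)))"
    have jU: "j0 \<in> U (Suc n1)" using LeastI_ex[OF ex] unfolding j0_def U_def by simp
    have lst: "fst (last (play S \<tau> (Suc n1))) = P" using n1(3) by (simp only: play_Suc' last_snoc fst_conv)
    have md1: "md (Suc n1) = Chase j0 (Suc n1)"
    proof -
      have "md (Suc n1) = mtrans k m P (md n1) (play S \<tau> (Suc n1))" by (rule md_Suc)
      also have "\<dots> = Chase j0 (Suc n1)" using n1(2) lst ex unfolding j0_def by (simp add: mtrans_def)
      finally show ?thesis .
    qed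
    obtain n2 where n2: "n2 > Suc n1" "md n2 = Ret" "caughtH k j0 (play S \<tau> n2)"
      using chase_exit[OF md1] by blast
    have "U n2 \<subseteq> U (Suc n1)" using U_anti n2(1) by simp
    moreover have "U (Suc n1) \<subseteq> U n" using U_anti n1(1) by simp
    moreover have "j0 \<notin> U n2" using n2(3) unfolding U_def by simp
    ultimately have "U n2 \<subset> U n" using jU by blast
    moreover have "finite (U n)" unfolding U_def by simp
    ultimately have "card (U n2) < card (U n)" by (simp add: psubset_card_mono)
    then show ?thesis using less.hyps n2(2) by blast
  qed
qed

lemma main_win: "\<exists>t. \<forall>j<m. caught_before k S \<tau> j t"
proof -
  obtain n where "md n = Ret" using chase_exit[OF md_0] by blast
  then obtain n' where "U n' = {}" using ret_progress by blast
  then have "\<forall>j<m. caughtH k j (play S \<tau> n')" unfolding U_def by blast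
  then show ?thesis using H_imp_caught by blast
qed

end

lemma one_to_m:
  assumes G: "graph V E" and m1: "1 \<le> m" and W: "cops_win V E k 1"
  shows "cops_win V E k m"
proof -
  obtain \<sigma>1 where w: "\<forall>\<tau>. robbers_legal V E k 1 \<sigma>1 \<tau> \<longrightarrow>
           cops_legal V E k \<sigma>1 \<tau> \<and> (\<exists>t. \<forall>j<1. caught_before k \<sigma>1 \<tau> j t)"
    using W unfolding cops_win_def by blast
  show ?thesis unfolding cops_win_def
  proof (intro exI[of _ "sigm E \<sigma>1 k m"] allI impI)
    fix \<tau> assume RL: "robbers_legal V E k m (sigm E \<sigma>1 k m) \<tau>"
    interpret cw V E k m \<sigma>1 \<tau>
      using G m1 w RL by unfold_locales blast+
    show "cops_legal V E k (sigm E \<sigma>1 k m) \<tau> \<and> (\<exists>t. \<forall>j<m. caught_before k (sigm E \<sigma>1 k m) \<tau> j t)"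
      using cops_ok main_win by blast
  qed
qed


lemma m_to_one:
  assumes m1: "1 \<le> m" and W: "cops_win V E k m"
  shows "cops_win V E k 1"
proof -
  obtain \<sigma>m where w: "\<forall>\<tau>. robbers_legal V E k m \<sigma>m \<tau> \<longrightarrow>
           cops_legal V E k \<sigma>m \<tau> \<and> (\<exists>t. \<forall>j<m. caught_before k \<sigma>m \<tau> j t)"
    using W unfolding cops_win_def by blast
  define \<sigma>1 :: "'a cop_strat" where "\<sigma>1 h = \<sigma>m (map (\<lambda>(C, R). (C, replicate m (hd R))) h)" for h
  show ?thesis unfolding cops_win_def
  proof (intro exI[of _ \<sigma>1] allI impI)
    fix \<tau>1 assume L1: "robbers_legal V E k 1 \<sigma>1 \<tau>1"
    define \<tau>m :: "'a rob_strat" where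
      "\<tau>m h C = replicate m (hd (\<tau>1 (map (\<lambda>(C, R). (C, [hd R])) h) C))" for h C
    have len1: "rpos \<sigma>1 \<tau>1 i = [hd (rpos \<sigma>1 \<tau>1 i)]" for i
      using L1 unfolding robbers_legal_def by (intro len1_hd) simp
    have nth0: "rpos \<sigma>1 \<tau>1 i ! 0 = hd (rpos \<sigma>1 \<tau>1 i)" for i
      using len1[of i] by (metis nth_Cons_0)
    have hdr: "hd (replicate m x) = x" for x :: 'a using m1 by (cases m) auto
    have eq: "cpos \<sigma>m \<tau>m s = cpos \<sigma>1 \<tau>1 s \<and> rpos \<sigma>m \<tau>m s = replicate m (hd (rpos \<sigma>1 \<tau>1 s))" for s
    proof (induction s rule: less_induct)
      case (less s)
      have pm: "map (\<lambda>i. (cpos \<sigma>m \<tau>m i, rpos \<sigma>m \<tau>m i)) [0..<s]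
          = map (\<lambda>i. (cpos \<sigma>1 \<tau>1 i, replicate m (hd (rpos \<sigma>1 \<tau>1 i)))) [0..<s]"
        using less by (intro map_cong refl) auto
      have c: "cpos \<sigma>m \<tau>m s = cpos \<sigma>1 \<tau>1 s"
      proof -
        have "cpos \<sigma>m \<tau>m s = \<sigma>m (map (\<lambda>i. (cpos \<sigma>m \<tau>m i, rpos \<sigma>m \<tau>m i)) [0..<s])" by (rule cpos_eq)
        also have "\<dots> = \<sigma>m (map (\<lambda>i. (cpos \<sigma>1 \<tau>1 i, replicate m (hd (rpos \<sigma>1 \<tau>1 i)))) [0..<s])"
          by (simp only: pm)
        also have "\<dots> = \<sigma>1 (map (\<lambda>i. (cpos \<sigma>1 \<tau>1 i, rpos \<sigma>1 \<tau>1 i)) [0..<s])"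
          unfolding \<sigma>1_def by (simp add: comp_def)
        also have "\<dots> = cpos \<sigma>1 \<tau>1 s" by (rule cpos_eq[symmetric])
        finally show ?thesis .
      qed
      have sh: "map (\<lambda>(C, R). (C, [hd R])) (play \<sigma>m \<tau>m s) = play \<sigma>1 \<tau>1 s"
      proof -
        have "map (\<lambda>(C, R). (C, [hd R])) (play \<sigma>m \<tau>m s)
           = map (\<lambda>i. (cpos \<sigma>1 \<tau>1 i, [hd (rpos \<sigma>1 \<tau>1 i)])) [0..<s]"
          unfolding play_eq pm by (simp add: comp_def hdr)
        also have "\<dots> = map (\<lambda>i. (cpos \<sigma>1 \<tau>1 i, rpos \<sigma>1 \<tau>1 i)) [0..<s]"
          using len1 by (intro map_cong refl) (metis)
        also have "\<dots> = play \<sigma>1 \<tau>1 s" by (rule play_eq[symmetric])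
        finally show ?thesis .
      qed
      have r: "rpos \<sigma>m \<tau>m s = replicate m (hd (rpos \<sigma>1 \<tau>1 s))"
      proof -
        have "rpos \<sigma>m \<tau>m s = \<tau>m (play \<sigma>m \<tau>m s) (cpos \<sigma>m \<tau>m s)" by (rule rpos_eq)
        also have "\<dots> = replicate m (hd (\<tau>1 (play \<sigma>1 \<tau>1 s) (cpos \<sigma>1 \<tau>1 s)))"
          unfolding \<tau>m_def sh c ..
        also have "\<tau>1 (play \<sigma>1 \<tau>1 s) (cpos \<sigma>1 \<tau>1 s) = rpos \<sigma>1 \<tau>1 s" by (rule rpos_eq[symmetric])
        finally show ?thesis .
      qed
      show ?case using c r by blast
    qed
    have cb: "caught_before k \<sigma>m \<tau>m j t \<longleftrightarrow> caught_before k \<sigma>1 \<tau>1 0 t" if j: "j < m" for j t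
      unfolding caught_before_def using j eq nth0 by simp
    have RLm: "robbers_legal V E k m \<sigma>m \<tau>m"
      unfolding robbers_legal_def
    proof (intro allI conjI impI)
      fix i
      have L1i: "length (rpos \<sigma>1 \<tau>1 i) = 1 \<and> set (rpos \<sigma>1 \<tau>1 i) \<subseteq> V
        \<and> (\<forall>j<1. adj E (rpos \<sigma>1 \<tau>1 i ! j) (rpos \<sigma>1 \<tau>1 (Suc i) ! j)
                 \<and> (caught_before k \<sigma>1 \<tau>1 j (Suc i) \<longrightarrow> rpos \<sigma>1 \<tau>1 (Suc i) ! j = rpos \<sigma>1 \<tau>1 i ! j))"
        using L1 unfolding robbers_legal_def by blast
      show "length (rpos \<sigma>m \<tau>m i) = m" using eq by simp
      have "hd (rpos \<sigma>1 \<tau>1 i) \<in> V" using L1i len1[of i] by (metis list.set_intros(1) subsetD)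
      then show "set (rpos \<sigma>m \<tau>m i) \<subseteq> V" using eq by (auto simp: set_replicate_conv_if)
      fix j assume j: "j < m"
      show "adj E (rpos \<sigma>m \<tau>m i ! j) (rpos \<sigma>m \<tau>m (Suc i) ! j)"
        using L1i j eq nth0 by simp
      assume "caught_before k \<sigma>m \<tau>m j (Suc i)"
      then have "caught_before k \<sigma>1 \<tau>1 0 (Suc i)" using cb[OF j] by simp
      then show "rpos \<sigma>m \<tau>m (Suc i) ! j = rpos \<sigma>m \<tau>m i ! j"
        using L1i j eq nth0 by simp
    qed
    then have CL: "cops_legal V E k \<sigma>m \<tau>m" and "\<exists>t. \<forall>j<m. caught_before k \<sigma>m \<tau>m j t"
      using w by blast+
    then obtain t where "\<forall>j<m. caught_before k \<sigma>m \<tau>m j t" by blast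
    then have "caught_before k \<sigma>1 \<tau>1 0 t" using cb[of 0 t] m1 by simp
    then have "\<exists>t. \<forall>j<1. caught_before k \<sigma>1 \<tau>1 j t" by auto
    moreover have "cops_legal V E k \<sigma>1 \<tau>1" using CL unfolding cops_legal_def using eq by simp
    ultimately show "cops_legal V E k \<sigma>1 \<tau>1 \<and> (\<exists>t. \<forall>j<1. caught_before k \<sigma>1 \<tau>1 j t)" by blast
  qed
qed

theorem mainTheorem1:
  fixes V :: "'v set" and E :: "'v \<Rightarrow> 'v \<Rightarrow> bool" and k m :: nat
  assumes "graph V E" and "k \<ge> 1" and "m \<ge> 1"
  shows "cops_win V E k m \<longleftrightarrow> cops_win V E k 1"
  using m_to_one[OF assms(3)] one_to_m[OF assms(1) assms(3)] by blast

end
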